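(* Let $G=([N],\mathcal{E})$ be an undirected graph, $\sigma=(\sigma_1,\dots,\sigma_N)\in(0,1)^N$, $\sigma_m=\min_i\sigma_i$, $c>0$ and $q\in(1-\sigma_m,1)$, and let $C\subset[N]$ be a set of compromised clients. Then the distributed mechanism is $\epsilon$-differentially private with respect to the uncompromised clients, with $\epsilon=\frac{q}{c(q+\sigma_m-1)}$: for every $\delta\ge0$, every pair $\theta(0),\theta'(0)\in\mathbb{R}^N$ that differ only in one coordinate $k\notin C$ with $|\theta_k(0)-\theta'_k(0)|\le\delta$, and every measurable set $\mathit{Obs}$ of observation sequences, $$\Pr[\text{observation}\in\mathit{Obs}\mid\theta(0)]\le e^{\epsilon\delta}\Pr[\text{observation}\in\mathit{Obs}\mid\theta'(0)].$$
   Context: Laplace distribution $Lap(b)$: density $\frac{1}{2b}e^{-|x|/b}$. $N(i)=\{j:(i,j)\in\mathcal{E}\}$ is the neighbor set of $i$. Distributed mechanism with parameters $\sigma\in(0,1)^N$, $c>0$, $q\in(0,1)$: each client $i$ has states $\theta_i(t),y_i(t)$ with real initial value $\theta_i(0)$. At each round $t=0,1,2,\dots$: (i) client $i$ sends $x_i(t)=\theta_i(t)+\eta_i(t)$ to every $j\in N(i)$, where the $\eta_i(t)$ ($i\in[N],t\ge0$) are mutually independent with $\eta_i(t)\sim Lap(cq^t)$; (ii) client $i$ sets $y_i(t)=\frac{1}{|N(i)|+1}\sum_{j\in N(i)\cup\{i\}}x_j(t)$; (iii) client $i$ sets $\theta_i(t+1)=(1-\sigma_i)\theta_i(t)+\sigma_i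 y_i(t)$. The adversary's observation is the sequence of all messages $(x_i(t))_{i\in[N],t\ge0}$ together with the internal states $(\theta_j(t),y_j(t))_{t\ge0}$ of every compromised client $j\in C$. *)

theory Defs
  imports "HOL-Probability.Probability"
begin

text \<open>Clients are indexed by 0,...,N-1 (i.e. [N] shifted by one).
  The graph is given by an edge set E of pairs of clients.\<close>

definition undirected_graph :: "nat \<Rightarrow> (nat \<times> nat) set \<Rightarrow> bool" where
  "undirected_graph N E \<longleftrightarrow> E \<subseteq> {..<N} \<times> {..<N} \<and> (\<forall>i j. (i, j) \<in> E \<longrightarrow> (j, i) \<in> E)
     \<and> (\<forall>i. (i, i) \<notin> E)"

definition nbrs :: "(nat \<times> nat) set \<Rightarrow> nat \<Rightarrow> nat set" where
  "nbrs E i = {j. (i, j) \<in> E}"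

definition laplace :: "real \<Rightarrow> real measure" where
  "laplace b = density lborel (\<lambda>x. ennreal (exp (- \<bar>x\<bar> / b) / (2 * b)))"

definition noise_space :: "nat \<Rightarrow> real \<Rightarrow> real \<Rightarrow> (nat \<times> nat \<Rightarrow> real) measure" where
  "noise_space N c q = (\<Pi>\<^sub>M (i, t) \<in> {..<N} \<times> UNIV. laplace (c * q ^ t))"

primrec dtheta :: "(nat \<times> nat) set \<Rightarrow> (nat \<Rightarrow> real) \<Rightarrow> (nat \<Rightarrow> real)
    \<Rightarrow> (nat \<times> nat \<Rightarrow> real) \<Rightarrow> nat \<Rightarrow> nat \<Rightarrow> real" where
  "dtheta E \<sigma> \<theta>0 \<eta> 0 = \<theta>0"
| "dtheta E \<sigma> \<theta>0 \<eta> (Suc t) = (\<lambda>i. (1 - \<sigma> i) * dtheta E \<sigma> \<theta>0 \<eta> t i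
      + \<sigma> i * ((\<Sum>j \<in> nbrs E i \<union> {i}. dtheta E \<sigma> \<theta>0 \<eta> t j + \<eta> (j, t))
                 / (real (card (nbrs E i)) + 1)))"

definition dmsg :: "(nat \<times> nat) set \<Rightarrow> (nat \<Rightarrow> real) \<Rightarrow> (nat \<Rightarrow> real)
    \<Rightarrow> (nat \<times> nat \<Rightarrow> real) \<Rightarrow> nat \<Rightarrow> nat \<Rightarrow> real" where
  "dmsg E \<sigma> \<theta>0 \<eta> t i = dtheta E \<sigma> \<theta>0 \<eta> t i + \<eta> (i, t)"

definition dy :: "(nat \<times> nat) set \<Rightarrow> (nat \<Rightarrow> real) \<Rightarrow> (nat \<Rightarrow> real)
    \<Rightarrow> (nat \<times> nat \<Rightarrow> real) \<Rightarrow> nat \<Rightarrow> nat \<Rightarrow> real" where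
  "dy E \<sigma> \<theta>0 \<eta> t i = (\<Sum>j \<in> nbrs E i \<union> {i}. dmsg E \<sigma> \<theta>0 \<eta> t j) / (real (card (nbrs E i)) + 1)"

text \<open>Observation: all messages (x_i(t)), and the internal states theta_j(t), y_j(t)
  of compromised clients j in C.\<close>
type_synonym observation = "(nat \<times> nat \<Rightarrow> real) \<times> (nat \<times> nat \<Rightarrow> real) \<times> (nat \<times> nat \<Rightarrow> real)"

definition obs_space :: "nat \<Rightarrow> nat set \<Rightarrow> observation measure" where
  "obs_space N C = (\<Pi>\<^sub>M p \<in> {..<N} \<times> UNIV. borel) \<Otimes>\<^sub>M
     ((\<Pi>\<^sub>M p \<in> C \<times> UNIV. borel) \<Otimes>\<^sub>M (\<Pi>\<^sub>M p \<in> C \<times> UNIV. borel))"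

definition observe :: "nat \<Rightarrow> (nat \<times> nat) set \<Rightarrow> nat set \<Rightarrow> (nat \<Rightarrow> real) \<Rightarrow> (nat \<Rightarrow> real)
    \<Rightarrow> (nat \<times> nat \<Rightarrow> real) \<Rightarrow> observation" where
  "observe N E C \<sigma> \<theta>0 \<eta> =
     (restrict (\<lambda>(i, t). dmsg E \<sigma> \<theta>0 \<eta> t i) ({..<N} \<times> UNIV),
      restrict (\<lambda>(j, t). dtheta E \<sigma> \<theta>0 \<eta> t j) (C \<times> UNIV),
      restrict (\<lambda>(j, t). dy E \<sigma> \<theta>0 \<eta> t j) (C \<times> UNIV))"

definition obs_prob :: "nat \<Rightarrow> (nat \<times> nat) set \<Rightarrow> nat set \<Rightarrow> (nat \<Rightarrow> real) \<Rightarrow> real \<Rightarrow> real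
    \<Rightarrow> (nat \<Rightarrow> real) \<Rightarrow> observation set \<Rightarrow> real" where
  "obs_prob N E C \<sigma> c q \<theta>0 Obs =
     measure (noise_space N c q) {\<eta> \<in> space (noise_space N c q). observe N E C \<sigma> \<theta>0 \<eta> \<in> Obs}"

end

theory Submission imports Defs begin


lemma approx_bound:
  fixes \<mu> :: "'a measure" and a C :: "nat \<Rightarrow> 'a set"
  assumes fm: "finite_measure \<mu>"
    and as: "\<And>i. a i \<in> sets \<mu>" and Cs: "\<And>i. C i \<in> sets \<mu>"
    and n: "n > 0" and e: "e > 0"
    and small: "\<And>i. measure \<mu> ((a i - C i) \<union> (C i - a i)) < e / (2 * real n)"
    and tail: "measure \<mu> ((\<Union>i. a i) - (\<Union>i<n. a i)) < e / 2"
  shows "measure \<mu> (((\<Union>i. a i) - (\<Union>i<n. C i)) \<union> ((\<Union>i<n. C i) - (\<Union>i. a i))) < e"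
proof -
  interpret finite_measure \<mu> by fact
  let ?U = "\<Union>i. a i" and ?V = "\<Union>i<n. a i" and ?D = "\<Union>i<n. C i"
  let ?d = "\<lambda>i. (a i - C i) \<union> (C i - a i)"
  have sub: "(?U - ?D) \<union> (?D - ?U) \<subseteq> (?U - ?V) \<union> (\<Union>i<n. ?d i)" by blast
  have Us: "?U \<in> sets \<mu>" using as by auto
  have Vs: "?V \<in> sets \<mu>" using as by auto
  have ds: "\<And>i. ?d i \<in> sets \<mu>" using as Cs by auto
  have "measure \<mu> ((?U - ?D) \<union> (?D - ?U)) \<le> measure \<mu> ((?U - ?V) \<union> (\<Union>i<n. ?d i))"
    using sub Us Vs ds by (intro finite_measure_mono) auto
  also have "\<dots> \<le> measure \<mu> (?U - ?V) + measure \<mu> (\<Union>i<n. ?d i)"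
    using Us Vs ds by (intro measure_Un_le) auto
  also have "measure \<mu> (\<Union>i<n. ?d i) \<le> (\<Sum>i<n. measure \<mu> (?d i))"
    using ds by (intro finite_measure_subadditive_finite) auto
  also have "\<dots> < (\<Sum>i<n. e / (2 * real n))"
    using n small by (intro sum_strict_mono) auto
  also have "(\<Sum>i<n. e / (2 * real n)) = e / 2" using n by simp
  finally show ?thesis using tail by linarith
qed

lemma approx_sigma:
  fixes \<mu> \<nu> :: "'a measure"
  assumes fm: "finite_measure \<mu>" "finite_measure \<nu>"
    and alg: "algebra \<Omega> G"
    and s\<mu>: "sigma_sets \<Omega> G \<subseteq> sets \<mu>" and s\<nu>: "sigma_sets \<Omega> G \<subseteq> sets \<nu>"
    and B: "B \<in> sigma_sets \<Omega> G"
  shows "\<forall>e>0. \<exists>A\<in>G. measure \<mu> ((B - A) \<union> (A - B)) < e \<and> measure \<nu> ((B - A) \<union> (A - B)) < e"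
  using B
proof induction
  case (Basic a)
  then show ?case by (intro allI impI bexI[of _ a]) auto
next
  case Empty
  have "{} \<in> G"
  proof -
    interpret algebra \<Omega> G by (rule alg)
    show ?thesis by simp
  qed
  then show ?case by (intro allI impI bexI[of _ "{}"]) auto
next
  case (Compl a)
  show ?case
  proof (intro allI impI)
    fix e :: real assume e: "e > 0"
    with Compl.IH obtain A where A: "A \<in> G" "measure \<mu> ((a - A) \<union> (A - a)) < e"
      "measure \<nu> ((a - A) \<union> (A - a)) < e" by blast
    have AO: "\<Omega> - A \<in> G" using alg A(1) by (simp add: algebra.compl_sets)
    have As: "A \<in> sigma_sets \<Omega> G" using A(1) by (rule sigma_sets.Basic)
    have sub: "((\<Omega> - a) - (\<Omega> - A)) \<union> ((\<Omega> - A) - (\<Omega> - a)) \<subseteq> (a - A) \<union> (A - a)" by blast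
    have "measure \<mu> (((\<Omega> - a) - (\<Omega> - A)) \<union> ((\<Omega> - A) - (\<Omega> - a))) \<le> measure \<mu> ((a - A) \<union> (A - a))"
      using sub Compl.hyps As s\<mu> by (intro finite_measure.finite_measure_mono[OF fm(1)]) auto
    moreover
    have "measure \<nu> (((\<Omega> - a) - (\<Omega> - A)) \<union> ((\<Omega> - A) - (\<Omega> - a))) \<le> measure \<nu> ((a - A) \<union> (A - a))"
      using sub Compl.hyps As s\<nu> by (intro finite_measure.finite_measure_mono[OF fm(2)]) auto
    ultimately show "\<exists>A'\<in>G. measure \<mu> ((\<Omega> - a - A') \<union> (A' - (\<Omega> - a))) < e \<and>
                     measure \<nu> ((\<Omega> - a - A') \<union> (A' - (\<Omega> - a))) < e"
      using AO A by (intro bexI[of _ "\<Omega> - A"]) auto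
  qed
next
  case (Union a)
  show ?case
  proof (intro allI impI)
    fix e :: real assume e: "e > 0"
    let ?V = "\<lambda>n. \<Union>i<n. a i"
    have as\<mu>: "\<And>i. a i \<in> sets \<mu>" and as\<nu>: "\<And>i. a i \<in> sets \<nu>" using Union.hyps s\<mu> s\<nu> by auto
    have inc: "incseq ?V" by (auto simp: incseq_def intro: order_less_le_trans)
    have UV: "(\<Union>n. ?V n) = (\<Union>i. a i)" by auto
    have L1: "(\<lambda>n. measure \<mu> (?V n)) \<longlonglongrightarrow> measure \<mu> (\<Union>i. a i)"
      using finite_measure.finite_Lim_measure_incseq[OF fm(1), of ?V] inc as\<mu> UV by auto
    have L2: "(\<lambda>n. measure \<nu> (?V n)) \<longlonglongrightarrow> measure \<nu> (\<Union>i. a i)"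
      using finite_measure.finite_Lim_measure_incseq[OF fm(2), of ?V] inc as\<nu> UV by auto
    from L1 e obtain n1 where n1: "\<And>n. n \<ge> n1 \<Longrightarrow> norm (measure \<mu> (?V n) - measure \<mu> (\<Union>i. a i)) < e/2"
      unfolding LIMSEQ_iff by (meson half_gt_zero)
    from L2 e obtain n2 where n2: "\<And>n. n \<ge> n2 \<Longrightarrow> norm (measure \<nu> (?V n) - measure \<nu> (\<Union>i. a i)) < e/2"
      unfolding LIMSEQ_iff by (meson half_gt_zero)
    define n where "n = Suc (max n1 n2)"
    have npos: "n > 0" by (simp add: n_def)
    have e2: "e / (2 * real n) > 0" using e npos by simp
    have "\<forall>i. \<exists>A. A \<in> G \<and> measure \<mu> ((a i - A) \<union> (A - a i)) < e / (2 * real n) \<and> measure \<nu> ((a i - A) \<union> (A - a i)) < e / (2 * real n)"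
      using Union.IH e2 by blast
    then obtain C where C: "\<And>i. C i \<in> G" "\<And>i. measure \<mu> ((a i - C i) \<union> (C i - a i)) < e / (2 * real n)"
      "\<And>i. measure \<nu> ((a i - C i) \<union> (C i - a i)) < e / (2 * real n)"
      by metis
    have CS: "\<And>i. C i \<in> sigma_sets \<Omega> G" using C(1) by (rule sigma_sets.Basic)
    have DG: "(\<Union>i<n. C i) \<in> G"
      using alg C(1) by (intro ring_of_sets.finite_UN algebra.axioms(1)) auto
    have t1: "measure \<mu> ((\<Union>i. a i) - (\<Union>i<n. a i)) < e / 2"
    proof -
      have "measure \<mu> ((\<Union>i. a i) - ?V n) = measure \<mu> (\<Union>i. a i) - measure \<mu> (?V n)"
        using as\<mu> by (intro finite_measure.finite_measure_Diff[OF fm(1)]) auto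
      moreover have "n \<ge> n1" by (simp add: n_def)
      ultimately show ?thesis using n1[of n] by (smt (verit) real_norm_def)
    qed
    have t2: "measure \<nu> ((\<Union>i. a i) - (\<Union>i<n. a i)) < e / 2"
    proof -
      have "measure \<nu> ((\<Union>i. a i) - ?V n) = measure \<nu> (\<Union>i. a i) - measure \<nu> (?V n)"
        using as\<nu> by (intro finite_measure.finite_measure_Diff[OF fm(2)]) auto
      moreover have "n \<ge> n2" by (simp add: n_def)
      ultimately show ?thesis using n2[of n] by (smt (verit) real_norm_def)
    qed
    have r1: "measure \<mu> (((\<Union>i. a i) - (\<Union>i<n. C i)) \<union> ((\<Union>i<n. C i) - (\<Union>i. a i))) < e"
      using CS s\<mu> by (intro approx_bound[OF fm(1) as\<mu> _ npos e C(2) t1]) auto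
    have r2: "measure \<nu> (((\<Union>i. a i) - (\<Union>i<n. C i)) \<union> ((\<Union>i<n. C i) - (\<Union>i. a i))) < e"
      using CS s\<nu> by (intro approx_bound[OF fm(2) as\<nu> _ npos e C(3) t2]) auto
    show "\<exists>A\<in>G. measure \<mu> ((\<Union>(range a) - A) \<union> (A - \<Union>(range a))) < e \<and>
               measure \<nu> ((\<Union>(range a) - A) \<union> (A - \<Union>(range a))) < e"
      using DG r1 r2 by blast
  qed
qed

lemma ext_le:
  fixes \<mu> \<nu> :: "'a measure"
  assumes fm: "finite_measure \<mu>" "finite_measure \<nu>"
    and alg: "algebra \<Omega> G"
    and s\<mu>: "sets \<mu> = sigma_sets \<Omega> G" and s\<nu>: "sets \<nu> = sigma_sets \<Omega> G"
    and K: "K \<ge> 0" and gen: "\<And>A. A \<in> G \<Longrightarrow> measure \<mu> A \<le> K * measure \<nu> A"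
    and B: "B \<in> sets \<mu>"
  shows "measure \<mu> B \<le> K * measure \<nu> B"
proof (rule field_le_epsilon)
  fix e :: real assume e: "e > 0"
  have e': "e / (K + 1) > 0" using e K by simp
  from approx_sigma[OF fm alg _ _ B[unfolded s\<mu>]] s\<mu> s\<nu> e'
  obtain A where A: "A \<in> G" "measure \<mu> ((B - A) \<union> (A - B)) < e / (K + 1)"
    "measure \<nu> ((B - A) \<union> (A - B)) < e / (K + 1)" by auto
  have As\<mu>: "A \<in> sets \<mu>" and As\<nu>: "A \<in> sets \<nu>" using A(1) s\<mu> s\<nu> by auto
  have Bs\<nu>: "B \<in> sets \<nu>" using B s\<mu> s\<nu> by auto
  have "measure \<mu> B \<le> measure \<mu> (A \<union> ((B - A) \<union> (A - B)))"
    using As\<mu> B by (intro finite_measure.finite_measure_mono[OF fm(1)]) auto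
  also have "\<dots> \<le> measure \<mu> A + measure \<mu> ((B - A) \<union> (A - B))"
    using As\<mu> B by (intro measure_Un_le) auto
  finally have 1: "measure \<mu> B \<le> K * measure \<nu> A + e / (K + 1)" using gen[OF A(1)] A(2) by linarith
  have "measure \<nu> A \<le> measure \<nu> (B \<union> ((B - A) \<union> (A - B)))"
    using As\<nu> Bs\<nu> by (intro finite_measure.finite_measure_mono[OF fm(2)]) auto
  also have "\<dots> \<le> measure \<nu> B + measure \<nu> ((B - A) \<union> (A - B))"
    using As\<nu> Bs\<nu> by (intro measure_Un_le) auto
  finally have 2: "measure \<nu> A \<le> measure \<nu> B + e / (K + 1)" using A(3) by linarith
  have "K * measure \<nu> A \<le> K * (measure \<nu> B + e / (K + 1))" using 2 K by (rule mult_left_mono)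
  then have "measure \<mu> B \<le> K * measure \<nu> B + (K * (e / (K + 1)) + e / (K + 1))"
    using 1 by (simp add: algebra_simps)
  also have "K * (e / (K + 1)) + e / (K + 1) = (K + 1) * (e / (K + 1))" by (simp only: distrib_right mult_1_left)
  also have "\<dots> = e" using K by simp
  finally show "measure \<mu> B \<le> K * measure \<nu> B + e" .
qed

lemma prob_space_laplace:
  assumes b: "b > 0"
  shows "prob_space (laplace b)"
proof (rule prob_spaceI)
  let ?g = "exponential_density (1 / b)"
  let ?h = "\<lambda>x. ennreal (?g x / 2)"
  have gi: "(\<integral>\<^sup>+x. ennreal (?g x) \<partial>lborel) = 1"
  proof -
    interpret prob_space "density lborel (\<lambda>x. ennreal (?g x))"
      using b by (intro prob_space_exponential_density) simp
    have "emeasure (density lborel (\<lambda>x. ennreal (?g x))) UNIV = 1"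
      using emeasure_space_1 by simp
    then show ?thesis by (simp add: emeasure_density)
  qed
  have hi: "(\<integral>\<^sup>+x. ?h x \<partial>lborel) = ennreal (1/2)"
  proof -
    have "(\<integral>\<^sup>+x. ?h x \<partial>lborel) = (\<integral>\<^sup>+x. ennreal (1/2) * ennreal (?g x) \<partial>lborel)"
    proof (intro nn_integral_cong)
      fix x
      have "ennreal (?g x / 2) = ennreal (1/2 * ?g x)" by simp
      also have "\<dots> = ennreal (1/2) * ennreal (?g x)"
        using exponential_density_nonneg[of "1/b" x] b by (intro ennreal_mult) simp_all
      finally show "?h x = ennreal (1/2) * ennreal (?g x)" .
    qed
    also have "\<dots> = ennreal (1/2) * (\<integral>\<^sup>+x. ennreal (?g x) \<partial>lborel)"
      by (intro nn_integral_cmult) simp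
    finally show ?thesis using gi by simp
  qed
  have hr: "(\<integral>\<^sup>+x. ?h (- x) \<partial>lborel) = ennreal (1/2)"
  proof -
    have "(\<integral>\<^sup>+x. ?h (- x) \<partial>lborel) = (\<integral>\<^sup>+x. ?h x \<partial>distr lborel borel uminus)"
      by (subst nn_integral_distr) auto
    then show ?thesis using hi by (simp add: lborel_distr_uminus)
  qed
  have "emeasure (laplace b) (space (laplace b)) = (\<integral>\<^sup>+x. ennreal (exp (- \<bar>x\<bar> / b) / (2 * b)) \<partial>lborel)"
    by (simp add: laplace_def emeasure_density)
  also have "\<dots> = (\<integral>\<^sup>+x. ?h x + ?h (- x) \<partial>lborel)"
  proof (rule nn_integral_cong_AE)
    show "AE x in lborel. ennreal (exp (- \<bar>x\<bar> / b) / (2 * b)) = ?h x + ?h (- x)"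
      using AE_lborel_singleton[of 0]
    proof eventually_elim
      case (elim x)
      show ?case
      proof (cases "x < 0")
        case True
        then show ?thesis using b by (simp add: exponential_density_def)
      next
        case False
        with elim have "x > 0" by simp
        then show ?thesis using b by (simp add: exponential_density_def)
      qed
    qed
  qed
  also have "\<dots> = (\<integral>\<^sup>+x. ?h x \<partial>lborel) + (\<integral>\<^sup>+x. ?h (- x) \<partial>lborel)"
    by (intro nn_integral_add) auto
  also have "\<dots> = ennreal (1/2) + ennreal (1/2)" using hi hr by (simp only:)
  also have "\<dots> = ennreal (1/2 + 1/2)" by (rule ennreal_plus[symmetric]) auto
  also have "\<dots> = 1" by simp
  finally show "emeasure (laplace b) (space (laplace b)) = 1" .
qed



lemma indicator_PiE_prod:
  fixes x :: "'i \<Rightarrow> 'a"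
  assumes "x \<in> extensional J" "finite J"
  shows "(indicator (Pi\<^sub>E J A) x :: ennreal) = (\<Prod>j\<in>J. indicator (A j) (x j))"
proof (cases "x \<in> Pi\<^sub>E J A")
  case True
  then show ?thesis by (auto simp: indicator_def PiE_iff intro!: prod.neutral)
next
  case False
  with assms obtain j where "j \<in> J" "x j \<notin> A j" by (auto simp: PiE_iff)
  then have "(\<Prod>j\<in>J. (indicator (A j) (x j) :: ennreal)) = 0"
    using assms(2) by (auto intro!: prod_zero_iff[THEN iffD2] simp: indicator_def)
  with False show ?thesis by simp
qed

lemma PiM_density_lborel:
  fixes h :: "'i \<Rightarrow> real \<Rightarrow> real" and J :: "'i set"
  assumes J: "finite J" and hn: "\<And>j x. 0 \<le> h j x" and hm: "\<And>j. h j \<in> borel_measurable borel"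
  shows "PiM J (\<lambda>j. density lborel (\<lambda>x. ennreal (h j x)))
       = density (PiM J (\<lambda>_. lborel)) (\<lambda>x. \<Prod>j\<in>J. ennreal (h j (x j)))"
proof -
  interpret D: product_sigma_finite "\<lambda>j. density lborel (\<lambda>x. ennreal (h j x))"
  proof (unfold product_sigma_finite_def, intro allI)
    fix i
    have "(\<lambda>x. ennreal (h i x)) \<in> borel_measurable lborel" using hm[of i] by simp
    then show "sigma_finite_measure (density lborel (\<lambda>x. ennreal (h i x)))"
      by (subst sigma_finite_measure.sigma_finite_iff_density_finite[OF sigma_finite_lborel]) auto
  qed
  interpret L: product_sigma_finite "\<lambda>_::'i. lborel::real measure"
    unfolding product_sigma_finite_def by (auto intro: lborel.sigma_finite_measure_axioms)
  have Fm: "(\<lambda>x. \<Prod>j\<in>J. ennreal (h j (x j))) \<in> borel_measurable (PiM J (\<lambda>_. lborel))"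
    using hm by measurable
  show ?thesis
  proof (rule sym, rule D.PiM_eqI)
    show "finite J" by fact
    show "sets (density (PiM J (\<lambda>_. lborel)) (\<lambda>x. \<Prod>j\<in>J. ennreal (h j (x j))))
      = sets (PiM J (\<lambda>j. density lborel (\<lambda>x. ennreal (h j x))))"
      unfolding sets_density by (intro sets_PiM_cong) auto
  next
    fix A assume A: "\<And>i. i \<in> J \<Longrightarrow> A i \<in> sets (density lborel (\<lambda>x. ennreal (h i x)))"
    have As: "Pi\<^sub>E J A \<in> sets (PiM J (\<lambda>_. lborel))"
      using A by (intro sets_PiM_I_finite J) auto
    have "emeasure (density (PiM J (\<lambda>_. lborel)) (\<lambda>x. \<Prod>j\<in>J. ennreal (h j (x j)))) (Pi\<^sub>E J A)
       = (\<integral>\<^sup>+x. (\<Prod>j\<in>J. ennreal (h j (x j))) * indicator (Pi\<^sub>E J A) x \<partial>PiM J (\<lambda>_. lborel))"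
      using Fm As by (rule emeasure_density)
    also have "\<dots> = (\<integral>\<^sup>+x. (\<Prod>j\<in>J. ennreal (h j (x j)) * indicator (A j) (x j)) \<partial>PiM J (\<lambda>_. lborel))"
    proof (intro nn_integral_cong)
      fix x assume "x \<in> space (PiM J (\<lambda>_. lborel::real measure))"
      then have "x \<in> extensional J" by (simp add: space_PiM PiE_def)
      then show "(\<Prod>j\<in>J. ennreal (h j (x j))) * indicator (Pi\<^sub>E J A) x
          = (\<Prod>j\<in>J. ennreal (h j (x j)) * indicator (A j) (x j))"
        using J by (simp add: indicator_PiE_prod prod.distrib)
    qed
    also have "\<dots> = (\<Prod>j\<in>J. \<integral>\<^sup>+y. ennreal (h j y) * indicator (A j) y \<partial>lborel)"
      using A hm by (intro L.product_nn_integral_prod J) auto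
    also have "\<dots> = (\<Prod>j\<in>J. emeasure (density lborel (\<lambda>x. ennreal (h j x))) (A j))"
      using A hm by (intro prod.cong refl) (auto simp: emeasure_density)
    finally show "emeasure (density (PiM J (\<lambda>_. lborel)) (\<lambda>x. \<Prod>j\<in>J. ennreal (h j (x j)))) (Pi\<^sub>E J A)
      = (\<Prod>j\<in>J. emeasure (density lborel (\<lambda>x. ennreal (h j x))) (A j))" .
  qed
qed

lemma PiM_lborel_shift:
  fixes s :: "'i \<Rightarrow> real" and J :: "'i set"
  assumes J: "finite J"
  shows "distr (PiM J (\<lambda>_. lborel)) (PiM J (\<lambda>_. lborel)) (\<lambda>x. \<lambda>j\<in>J. s j + x j) = PiM J (\<lambda>_. lborel::real measure)"
proof -
  interpret L: product_sigma_finite "\<lambda>_::'i. lborel::real measure"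
    unfolding product_sigma_finite_def by (auto intro: lborel.sigma_finite_measure_axioms)
  have Tm: "(\<lambda>x. \<lambda>j\<in>J. s j + x j) \<in> measurable (PiM J (\<lambda>_. lborel)) (PiM J (\<lambda>_. lborel::real measure))"
    by measurable
  show ?thesis
  proof (rule L.PiM_eqI)
    show "finite J" by fact
    show "sets (distr (PiM J (\<lambda>_. lborel)) (PiM J (\<lambda>_. lborel)) (\<lambda>x. \<lambda>j\<in>J. s j + x j)) = sets (PiM J (\<lambda>_. lborel::real measure))"
      by simp
  next
    fix A assume A: "\<And>i. i \<in> J \<Longrightarrow> A i \<in> sets (lborel::real measure)"
    have pre: "(\<lambda>x. \<lambda>j\<in>J. s j + x j) -` Pi\<^sub>E J A \<inter> space (PiM J (\<lambda>_. lborel::real measure))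
       = Pi\<^sub>E J (\<lambda>j. (+) (s j) -` A j)"
      by (auto simp: space_PiM PiE_iff extensional_def)
    have pm: "(+) (s j) -` A j \<in> sets borel" if j: "j \<in> J" for j
    proof -
      have "(\<lambda>x. s j + x) \<in> borel_measurable borel" by measurable
      from measurable_sets[OF this A[OF j, unfolded sets_lborel]] show ?thesis by simp
    qed
    have "emeasure (distr (PiM J (\<lambda>_. lborel)) (PiM J (\<lambda>_. lborel)) (\<lambda>x. \<lambda>j\<in>J. s j + x j)) (Pi\<^sub>E J A)
       = emeasure (PiM J (\<lambda>_. lborel)) (Pi\<^sub>E J (\<lambda>j. (+) (s j) -` A j))"
      using A J pm by (subst emeasure_distr[OF Tm]) (auto intro!: sets_PiM_I_finite simp: pre)
    also have "\<dots> = (\<Prod>j\<in>J. emeasure lborel ((+) (s j) -` A j))"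
      using A J pm by (intro L.emeasure_PiM) auto
    also have "\<dots> = (\<Prod>j\<in>J. emeasure lborel (A j))"
    proof (intro prod.cong refl)
      fix j assume j: "j \<in> J"
      have "emeasure (distr lborel borel ((+) (s j))) (A j) = emeasure lborel ((+) (s j) -` A j \<inter> space lborel)"
        using A j by (intro emeasure_distr) auto
      then show "emeasure lborel ((+) (s j) -` A j) = emeasure lborel (A j)"
        by (simp add: lborel_distr_plus)
    qed
    finally show "emeasure (distr (PiM J (\<lambda>_. lborel)) (PiM J (\<lambda>_. lborel)) (\<lambda>x. \<lambda>j\<in>J. s j + x j)) (Pi\<^sub>E J A)
       = (\<Prod>j\<in>J. emeasure lborel (A j))" .
  qed
qed



lemma lap_shift_le:
  fixes b s y :: real
  assumes b: "b > 0"
  shows "exp (- \<bar>- s + y\<bar> / b) / (2 * b) \<le> exp (\<bar>s\<bar> / b) * (exp (- \<bar>y\<bar> / b) / (2 * b))"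
proof -
  have "- \<bar>- s + y\<bar> \<le> \<bar>s\<bar> - \<bar>y\<bar>" by linarith
  then have "- \<bar>- s + y\<bar> / b \<le> (\<bar>s\<bar> - \<bar>y\<bar>) / b" using b by (intro divide_right_mono) auto
  then have "exp (- \<bar>- s + y\<bar> / b) \<le> exp (\<bar>s\<bar> / b + - \<bar>y\<bar> / b)" by (simp add: diff_divide_distrib)
  also have "\<dots> = exp (\<bar>s\<bar> / b) * exp (- \<bar>y\<bar> / b)" by (rule exp_add)
  finally show ?thesis using b by (simp add: divide_right_mono)
qed

lemma finite_core:
  fixes b s :: "'i \<Rightarrow> real" and J :: "'i set"
  assumes J: "finite J" and b: "\<And>j. b j > 0"
    and X: "X \<in> sets (PiM J (\<lambda>j. laplace (b j)))"
    and W: "(\<Sum>j\<in>J. \<bar>s j\<bar> / b j) \<le> W"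
  shows "emeasure (PiM J (\<lambda>j. laplace (b j))) ((\<lambda>x. \<lambda>j\<in>J. s j + x j) -` X \<inter> space (PiM J (\<lambda>j. laplace (b j))))
    \<le> ennreal (exp W) * emeasure (PiM J (\<lambda>j. laplace (b j))) X"
proof -
  define h where "h j x = exp (- \<bar>x\<bar> / b j) / (2 * b j)" for j x
  let ?L = "PiM J (\<lambda>_. lborel::real measure)"
  let ?F = "\<lambda>x. \<Prod>j\<in>J. ennreal (h j (x j))"
  let ?T = "\<lambda>x. \<lambda>j\<in>J. s j + x j"
  let ?T' = "\<lambda>x. \<lambda>j\<in>J. - s j + x j"
  have hn: "\<And>j x. 0 \<le> h j x" using b by (simp add: h_def less_imp_le)
  have hm: "\<And>j. h j \<in> borel_measurable borel" unfolding h_def by measurable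
  have eq: "PiM J (\<lambda>j. laplace (b j)) = density ?L ?F"
    unfolding laplace_def h_def[symmetric] using PiM_density_lborel[OF J hn hm] .
  have Fm: "?F \<in> borel_measurable ?L" using hm by measurable
  have Tm: "?T \<in> measurable ?L ?L" by measurable
  have Xs: "X \<in> sets ?L" using X by (simp add: eq)
  have sp: "space (PiM J (\<lambda>j. laplace (b j))) = space ?L" by (simp add: eq)
  have pre: "?T -` X \<inter> space ?L \<in> sets ?L" using Tm Xs by (rule measurable_sets)
  have "emeasure (PiM J (\<lambda>j. laplace (b j))) (?T -` X \<inter> space (PiM J (\<lambda>j. laplace (b j))))
      = emeasure (density ?L ?F) (?T -` X \<inter> space ?L)" by (simp add: eq)
  also have "\<dots> = (\<integral>\<^sup>+x. ?F x * indicator (?T -` X \<inter> space ?L) x \<partial>?L)"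
    using Fm pre by (rule emeasure_density)
  also have "\<dots> = (\<integral>\<^sup>+x. (\<lambda>y. ?F (?T' y) * indicator X y) (?T x) \<partial>?L)"
  proof (intro nn_integral_cong)
    fix x assume x: "x \<in> space ?L"
    then have xe: "x \<in> extensional J" by (simp add: space_PiM PiE_def)
    have "?T' (?T x) = x"
      using xe by (auto simp: fun_eq_iff extensional_def)
    then show "?F x * indicator (?T -` X \<inter> space ?L) x = (\<lambda>y. ?F (?T' y) * indicator X y) (?T x)"
      using x by (simp add: indicator_def)
  qed
  also have "\<dots> = (\<integral>\<^sup>+y. ?F (?T' y) * indicator X y \<partial>distr ?L ?L ?T)"
    using Tm Xs hm by (subst nn_integral_distr) (auto intro!: borel_measurable_times_ennreal)
  also have "\<dots> = (\<integral>\<^sup>+y. ?F (?T' y) * indicator X y \<partial>?L)"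
    by (simp add: PiM_lborel_shift[OF J])
  also have "\<dots> \<le> (\<integral>\<^sup>+y. ennreal (exp W) * (?F y * indicator X y) \<partial>?L)"
  proof (intro nn_integral_mono)
    fix y assume y: "y \<in> space ?L"
    have "?F (?T' y) = (\<Prod>j\<in>J. ennreal (h j (- s j + y j)))" by (intro prod.cong) auto
    also have "\<dots> = ennreal (\<Prod>j\<in>J. h j (- s j + y j))" using hn by (intro prod_ennreal) auto
    also have "\<dots> \<le> ennreal (exp W * (\<Prod>j\<in>J. h j (y j)))"
    proof (intro ennreal_leI)
      have "(\<Prod>j\<in>J. h j (- s j + y j)) \<le> (\<Prod>j\<in>J. exp (\<bar>s j\<bar> / b j) * h j (y j))"
      proof (intro prod_mono conjI)
        fix j assume "j \<in> J"
        show "0 \<le> h j (- s j + y j)" by (rule hn)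
        show "h j (- s j + y j) \<le> exp (\<bar>s j\<bar> / b j) * h j (y j)"
          unfolding h_def by (rule lap_shift_le[OF b])
      qed
      also have "\<dots> = exp (\<Sum>j\<in>J. \<bar>s j\<bar> / b j) * (\<Prod>j\<in>J. h j (y j))"
        using J by (simp add: prod.distrib exp_sum)
      also have "\<dots> \<le> exp W * (\<Prod>j\<in>J. h j (y j))"
        using W hn by (intro mult_right_mono prod_nonneg) auto
      finally show "(\<Prod>j\<in>J. h j (- s j + y j)) \<le> exp W * (\<Prod>j\<in>J. h j (y j))" .
    qed
    also have "\<dots> = ennreal (exp W) * ?F y"
      using hn by (simp add: ennreal_mult prod_ennreal prod_nonneg)
    finally show "?F (?T' y) * indicator X y \<le> ennreal (exp W) * (?F y * indicator X y)"
      by (auto simp: indicator_def mult.assoc)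
  qed
  also have "\<dots> = ennreal (exp W) * (\<integral>\<^sup>+y. ?F y * indicator X y \<partial>?L)"
    using Fm Xs by (intro nn_integral_cmult) auto
  also have "\<dots> = ennreal (exp W) * emeasure (density ?L ?F) X"
    using Fm Xs by (simp add: emeasure_density)
  finally show ?thesis by (simp add: eq)
qed


lemma nbrs_sub:
  assumes "undirected_graph N E" "i < N"
  shows "nbrs E i \<union> {i} \<subseteq> {..<N}"
  using assms by (auto simp: undirected_graph_def nbrs_def)

lemma dtheta_shift:
  assumes G: "undirected_graph N E"
    and init: "\<And>j. j < N \<Longrightarrow> \<theta>0' j = \<theta>0 j - d 0 j"
    and step: "\<And>t i. i < N \<Longrightarrow> d (Suc t) i = (1 - \<sigma> i) * d t i"
    and eta: "\<And>t i. i < N \<Longrightarrow> \<eta>' (i, t) = \<eta> (i, t) + d t i"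
  shows "i < N \<Longrightarrow> dtheta E \<sigma> \<theta>0' \<eta>' t i = dtheta E \<sigma> \<theta>0 \<eta> t i - d t i"
proof (induction t arbitrary: i)
  case 0
  then show ?case using init by simp
next
  case (Suc t)
  have sub: "nbrs E i \<union> {i} \<subseteq> {..<N}" using nbrs_sub[OF G Suc.prems] .
  have S: "(\<Sum>j \<in> nbrs E i \<union> {i}. dtheta E \<sigma> \<theta>0' \<eta>' t j + \<eta>' (j, t))
         = (\<Sum>j \<in> nbrs E i \<union> {i}. dtheta E \<sigma> \<theta>0 \<eta> t j + \<eta> (j, t))"
  proof (intro sum.cong refl)
    fix j assume "j \<in> nbrs E i \<union> {i}"
    with sub have j: "j < N" by auto
    show "dtheta E \<sigma> \<theta>0' \<eta>' t j + \<eta>' (j, t) = dtheta E \<sigma> \<theta>0 \<eta> t j + \<eta> (j, t)"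
      using Suc.IH[OF j] eta[OF j] by simp
  qed
  let ?S = "(\<Sum>j \<in> nbrs E i \<union> {i}. dtheta E \<sigma> \<theta>0 \<eta> t j + \<eta> (j, t)) / (real (card (nbrs E i)) + 1)"
  have "dtheta E \<sigma> \<theta>0' \<eta>' (Suc t) i = (1 - \<sigma> i) * (dtheta E \<sigma> \<theta>0 \<eta> t i - d t i) + \<sigma> i * ?S"
    using Suc.IH[OF Suc.prems] S by simp
  also have "\<dots> = dtheta E \<sigma> \<theta>0 \<eta> (Suc t) i - d (Suc t) i"
    using step[OF Suc.prems] by (simp add: algebra_simps)
  finally show ?case .
qed

lemma dmsg_shift:
  assumes G: "undirected_graph N E"
    and init: "\<And>j. j < N \<Longrightarrow> \<theta>0' j = \<theta>0 j - d 0 j"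
    and step: "\<And>t i. i < N \<Longrightarrow> d (Suc t) i = (1 - \<sigma> i) * d t i"
    and eta: "\<And>t i. i < N \<Longrightarrow> \<eta>' (i, t) = \<eta> (i, t) + d t i"
    and i: "i < N"
  shows "dmsg E \<sigma> \<theta>0' \<eta>' t i = dmsg E \<sigma> \<theta>0 \<eta> t i"
  using dtheta_shift[OF G init step eta i, of t] eta[OF i, of t] by (simp add: dmsg_def)

lemma observe_shift:
  assumes G: "undirected_graph N E" and CN: "C \<subseteq> {..<N}"
    and init: "\<And>j. j < N \<Longrightarrow> \<theta>0' j = \<theta>0 j - d 0 j"
    and step: "\<And>t i. i < N \<Longrightarrow> d (Suc t) i = (1 - \<sigma> i) * d t i"
    and eta: "\<And>t i. i < N \<Longrightarrow> \<eta>' (i, t) = \<eta> (i, t) + d t i"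
    and dC: "\<And>t j. j \<in> C \<Longrightarrow> d t j = 0"
  shows "observe N E C \<sigma> \<theta>0' \<eta>' = observe N E C \<sigma> \<theta>0 \<eta>"
proof -
  note dm = dmsg_shift[OF G init step eta]
  note dt = dtheta_shift[OF G init step eta]
  have 1: "restrict (\<lambda>(i, t). dmsg E \<sigma> \<theta>0' \<eta>' t i) ({..<N} \<times> UNIV)
         = restrict (\<lambda>(i, t). dmsg E \<sigma> \<theta>0 \<eta> t i) ({..<N} \<times> UNIV)"
    by (intro restrict_ext) (auto simp: dm)
  have 2: "restrict (\<lambda>(j, t). dtheta E \<sigma> \<theta>0' \<eta>' t j) (C \<times> UNIV)
         = restrict (\<lambda>(j, t). dtheta E \<sigma> \<theta>0 \<eta> t j) (C \<times> UNIV)"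
    using CN by (intro restrict_ext) (auto simp: dt dC)
  have 3: "restrict (\<lambda>(j, t). dy E \<sigma> \<theta>0' \<eta>' t j) (C \<times> UNIV)
         = restrict (\<lambda>(j, t). dy E \<sigma> \<theta>0 \<eta> t j) (C \<times> UNIV)"
  proof (intro restrict_ext)
    fix p assume p: "p \<in> C \<times> (UNIV :: nat set)"
    obtain j t where pj: "p = (j, t)" by (cases p)
    with p CN have j: "j < N" by auto
    have "(\<Sum>l \<in> nbrs E j \<union> {j}. dmsg E \<sigma> \<theta>0' \<eta>' t l) = (\<Sum>l \<in> nbrs E j \<union> {j}. dmsg E \<sigma> \<theta>0 \<eta> t l)"
      using nbrs_sub[OF G j] by (intro sum.cong refl) (auto simp: dm)
    then show "(\<lambda>(j, t). dy E \<sigma> \<theta>0' \<eta>' t j) p = (\<lambda>(j, t). dy E \<sigma> \<theta>0 \<eta> t j) p"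
      by (simp add: pj dy_def)
  qed
  show ?thesis unfolding observe_def using 1 2 3 by simp
qed

lemma W_bound:
  fixes J :: "(nat \<times> nat) set" and c q \<sigma>k \<sigma>m D \<delta> :: real
  assumes J: "finite J"
    and c: "c > 0" and q: "q > 0" and sk: "0 < \<sigma>k" "\<sigma>k < 1" and smk: "\<sigma>m \<le> \<sigma>k"
    and qlow: "1 - \<sigma>m < q" and D: "\<bar>D\<bar> \<le> \<delta>"
  shows "(\<Sum>j\<in>J. \<bar>(\<lambda>(i, t). if i = k then (1 - \<sigma>k) ^ t * D else 0) j\<bar> / (\<lambda>(i, t). c * q ^ t) j)
    \<le> q / (c * (q + \<sigma>m - 1)) * \<delta>"
proof -
  define r where "r = (1 - \<sigma>k) / q"
  define a where "a t = \<bar>D\<bar> / c * r ^ t" for t :: nat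
  have r0: "0 \<le> r" using sk q unfolding r_def by (simp add: zero_le_divide_iff)
  have r1: "r < 1" using sk q qlow smk by (simp add: r_def field_simps)
  have an: "\<And>t. 0 \<le> a t" using r0 c by (simp add: a_def)
  have tm: "\<bar>(\<lambda>(i, t). if i = k then (1 - \<sigma>k) ^ t * D else 0) j\<bar> / (\<lambda>(i, t). c * q ^ t) j
      = (if fst j = k then a (snd j) else 0)" for j
  proof -
    obtain i t where j: "j = (i, t)" by (cases j)
    have "\<bar>(1 - \<sigma>k) ^ t * D\<bar> / (c * q ^ t) = \<bar>D\<bar> / c * ((1 - \<sigma>k) ^ t / q ^ t)"
      using sk by (simp add: abs_mult power_abs)
    then show ?thesis by (simp add: j a_def r_def power_divide)
  qed
  have sumeq: "(\<Sum>j\<in>J. if fst j = k then a (snd j) else 0) = (\<Sum>j\<in>{j\<in>J. fst j = k}. a (snd j))"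
    using J by (simp add: sum.inter_filter)
  also have "\<dots> = (\<Sum>t\<in>snd ` {j\<in>J. fst j = k}. a t)"
    by (subst sum.reindex) (auto simp: inj_on_def prod_eq_iff)
  also have "\<dots> \<le> suminf a"
  proof (rule sum_le_suminf)
    show "summable a" unfolding a_def using r0 r1 by (intro summable_mult summable_geometric) simp
  qed (use J an in auto)
  also have "suminf a = \<bar>D\<bar> / c * (1 / (1 - r))"
    unfolding a_def using r0 r1 by (subst suminf_mult) (simp_all add: suminf_geometric)
  also have "1 / (1 - r) = q / (q + \<sigma>k - 1)"
    using q r1 by (simp add: r_def field_simps)
  also have "\<bar>D\<bar> / c * (q / (q + \<sigma>k - 1)) \<le> \<delta> / c * (q / (q + \<sigma>m - 1))"
  proof (intro mult_mono divide_right_mono divide_left_mono)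
    show "q + \<sigma>m - 1 \<le> q + \<sigma>k - 1" using smk by simp
    show "0 < (q + \<sigma>k - 1) * (q + \<sigma>m - 1)" using qlow smk by (intro mult_pos_pos) auto
  qed (use D c q qlow smk in auto)
  also have "\<delta> / c * (q / (q + \<sigma>m - 1)) = q / (c * (q + \<sigma>m - 1)) * \<delta>"
    by (simp add: field_simps)
  finally show ?thesis by (simp add: tm)
qed

theorem mainTheorem5:
  fixes N :: nat and E :: "(nat \<times> nat) set" and \<sigma> :: "nat \<Rightarrow> real"
    and c q \<delta> :: real and C :: "nat set" and k :: nat
    and \<theta>0 \<theta>0' :: "nat \<Rightarrow> real" and Obs :: "observation set"
  assumes "N > 0"
    and "undirected_graph N E"
    and "\<forall>i < N. 0 < \<sigma> i \<and> \<sigma> i < 1"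
    and "c > 0"
    and "1 - Min (\<sigma> ` {..<N}) < q" and "q < 1"
    and "C \<subseteq> {..<N}"
    and "k < N" and "k \<notin> C"
    and "\<delta> \<ge> 0"
    and "\<forall>i < N. i \<noteq> k \<longrightarrow> \<theta>0 i = \<theta>0' i"
    and "\<bar>\<theta>0 k - \<theta>0' k\<bar> \<le> \<delta>"
    and "Obs \<in> sets (obs_space N C)"
  shows "obs_prob N E C \<sigma> c q \<theta>0 Obs
     \<le> exp (q / (c * (q + Min (\<sigma> ` {..<N}) - 1)) * \<delta>) * obs_prob N E C \<sigma> c q \<theta>0' Obs"
proof -
  note N0 = assms(1) and G = assms(2) and sig = assms(3) and cpos = assms(4)
    and qlow = assms(5) and qhigh = assms(6) and CN = assms(7) and kN = assms(8) and kC = assms(9)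
    and dpos = assms(10) and th = assms(11) and dlt = assms(12)
  define \<sigma>m where "\<sigma>m = Min (\<sigma> ` {..<N})"
  define K where "K = exp (q / (c * (q + \<sigma>m - 1)) * \<delta>)"
  define I0 where "I0 = {..<N} \<times> (UNIV :: nat set)"
  define b where "b = (\<lambda>(i::nat, t::nat). c * q ^ t)"
  define M where "M = (\<lambda>j. laplace (b j))"
  define P where "P = PiM I0 M"
  define D where "D = \<theta>0 k - \<theta>0' k"
  define s where "s = (\<lambda>(i::nat, t::nat). if i = k then (1 - \<sigma> k) ^ t * D else 0)"
  define T where "T = (\<lambda>x. \<lambda>j\<in>I0. s j + x j)"
  define T' where "T' = (\<lambda>x. \<lambda>j\<in>I0. - s j + x j)"
  have sm_in: "\<sigma>m \<in> \<sigma> ` {..<N}" unfolding \<sigma>m_def using N0 by (intro Min_in) auto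
  then have sm0: "0 < \<sigma>m" "\<sigma>m < 1" using sig by auto
  have smk: "\<sigma>m \<le> \<sigma> k" unfolding \<sigma>m_def using kN by (intro Min_le) auto
  have qlow': "1 - \<sigma>m < q" using qlow by (simp add: \<sigma>m_def)
  have qpos: "q > 0" using qlow' sm0 by simp
  have bpos: "\<And>j. b j > 0" using cpos qpos by (auto simp: b_def split: prod.splits)
  have psM: "\<And>j. prob_space (M j)" unfolding M_def using bpos by (intro prob_space_laplace)
  interpret PP: product_prob_space M I0
    using psM by (simp add: product_prob_space_def product_prob_space_axioms_def
        product_sigma_finite_def prob_space_imp_sigma_finite)
  have probP: "prob_space P" unfolding P_def using psM by (intro prob_space_PiM)
  then have finP: "finite_measure P" by (rule prob_space.finite_measure)
  have noise: "noise_space N c q = P"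
  proof -
    have "(\<lambda>(i, t). laplace (c * q ^ t)) = M" by (auto simp: M_def b_def fun_eq_iff)
    then show ?thesis by (simp add: noise_space_def P_def I0_def)
  qed
  have sl: "\<And>b. sets (laplace b) = sets borel" by (simp add: laplace_def)
  have spl: "\<And>b. space (laplace b) = UNIV" by (simp add: laplace_def)
  have spP: "space P = PiE I0 (\<lambda>_. UNIV)" by (simp add: P_def M_def space_PiM spl)
  have shiftm: "(\<lambda>x. \<lambda>j\<in>I0. u j + x j) \<in> measurable P P" for u :: "nat \<times> nat \<Rightarrow> real"
    unfolding P_def
  proof (rule measurable_restrict)
    fix j assume j: "j \<in> I0"
    have mj: "measurable (PiM I0 M) (M j) = borel_measurable (PiM I0 M)"
      unfolding M_def by (rule measurable_cong_sets[OF refl sl])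
    have "(\<lambda>x. x j) \<in> measurable (PiM I0 M) (M j)" using j by (rule measurable_component_singleton)
    then have "(\<lambda>x. x j) \<in> borel_measurable (PiM I0 M)" by (simp only: mj)
    then have "(\<lambda>x. u j + x j) \<in> borel_measurable (PiM I0 M)" by measurable
    then show "(\<lambda>x. u j + x j) \<in> measurable (PiM I0 M) (M j)" by (simp only: mj)
  qed
  have Tm: "T \<in> measurable P P" unfolding T_def by (rule shiftm)
  have T'm: "T' \<in> measurable P P" unfolding T'_def using shiftm[of "\<lambda>j. - s j"] by simp
  have Tin: "\<And>x. T x \<in> space P" "\<And>x. T' x \<in> space P" by (auto simp: spP T_def T'_def)
  have TT': "\<And>x. x \<in> space P \<Longrightarrow> T (T' x) = x"
    by (auto simp: spP T_def T'_def fun_eq_iff PiE_def extensional_def)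

  have key: "observe N E C \<sigma> \<theta>0' (T \<eta>) = observe N E C \<sigma> \<theta>0 \<eta>" if "\<eta> \<in> space P" for \<eta>
  proof (rule observe_shift[OF G CN, where d = "\<lambda>t i. s (i, t)"])
    show "\<And>j. j < N \<Longrightarrow> \<theta>0' j = \<theta>0 j - s (j, 0)" using th by (auto simp: s_def D_def)
    show "\<And>t i. i < N \<Longrightarrow> s (i, Suc t) = (1 - \<sigma> i) * s (i, t)" by (simp add: s_def)
    show "\<And>t i. i < N \<Longrightarrow> T \<eta> (i, t) = \<eta> (i, t) + s (i, t)" by (simp add: T_def I0_def)
    show "\<And>t j. j \<in> C \<Longrightarrow> s (j, t) = 0" using kC by (auto simp: s_def)
  qed

  have gen: "measure P (T -` A \<inter> space P) \<le> K * measure P A" if A: "A \<in> PP.generator" for A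
  proof -
    from A obtain J X where J: "finite J" "J \<subseteq> I0" and X: "X \<in> sets (PiM J M)"
      and AJ: "A = prod_emb I0 M J X" by (auto elim!: PP.generator.cases)
    let ?TJ = "\<lambda>x. \<lambda>j\<in>J. s j + x j"
    have TJm: "?TJ \<in> measurable (PiM J M) (PiM J M)"
    proof (rule measurable_restrict)
      fix j assume j: "j \<in> J"
      have mj: "measurable (PiM J M) (M j) = borel_measurable (PiM J M)"
        unfolding M_def by (rule measurable_cong_sets[OF refl sl])
      have "(\<lambda>x. x j) \<in> measurable (PiM J M) (M j)" using j by (rule measurable_component_singleton)
      then have "(\<lambda>x. x j) \<in> borel_measurable (PiM J M)" by (simp only: mj)
      then have "(\<lambda>x. s j + x j) \<in> borel_measurable (PiM J M)" by measurable
      then show "(\<lambda>x. s j + x j) \<in> measurable (PiM J M) (M j)" by (simp only: mj)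
    qed
    let ?Y = "?TJ -` X \<inter> space (PiM J M)"
    have Ys: "?Y \<in> sets (PiM J M)" using TJm X by (rule measurable_sets)
    have restr: "restrict (T x) J = ?TJ (restrict x J)" for x
      using J(2) by (auto simp: T_def restrict_def fun_eq_iff)
    have pre: "T -` A \<inter> space P = prod_emb I0 M J ?Y"
      unfolding AJ prod_emb_def
      using Tin restr by (auto simp: spP space_PiM M_def spl PiE_def extensional_def restrict_def)
    have W: "(\<Sum>j\<in>J. \<bar>s j\<bar> / b j) \<le> q / (c * (q + \<sigma>m - 1)) * \<delta>"
      unfolding s_def b_def
      using W_bound[OF J(1) cpos qpos _ _ smk qlow', where k=k and D=D and \<delta>=\<delta>] sig kN dlt by (auto simp: D_def)
    have core: "emeasure (PiM J M) ?Y \<le> ennreal K * emeasure (PiM J M) X"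
      unfolding M_def K_def using finite_core[OF J(1) bpos X[unfolded M_def] W] by simp
    have e1: "emeasure P (T -` A \<inter> space P) = emeasure (PiM J M) ?Y"
    proof -
      have "emeasure P (prod_emb I0 M J ?Y) = emeasure (PiM J M) ?Y"
        unfolding P_def using J Ys by (intro PP.emeasure_PiM_emb')
      then show ?thesis by (simp only: pre)
    qed
    have e2: "emeasure P A = emeasure (PiM J M) X"
      unfolding AJ P_def using J X by (intro PP.emeasure_PiM_emb')
    have fin2: "emeasure P A < top" using finite_measure.emeasure_finite[OF finP, of A] by (simp add: less_top)
    have "measure P (T -` A \<inter> space P) = enn2real (emeasure P (T -` A \<inter> space P))"
      by (simp add: measure_def)
    also have "\<dots> \<le> enn2real (ennreal K * emeasure P A)"
    proof (rule enn2real_mono)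
      show "emeasure P (T -` A \<inter> space P) \<le> ennreal K * emeasure P A" using core e1 e2 by simp
      show "ennreal K * emeasure P A < top" using fin2 by (simp add: ennreal_mult_less_top)
    qed
    also have "\<dots> = K * measure P A" by (simp add: measure_def enn2real_mult K_def)
    finally show ?thesis .
  qed

  have ext: "measure P (T -` B \<inter> space P) \<le> K * measure P B" if B: "B \<in> sets P" for B
  proof -
    have fmD: "finite_measure (distr P P T)"
      using prob_space.prob_space_distr[OF probP Tm] by (rule prob_space.finite_measure)
    have sP: "sets P = sigma_sets (space P) PP.generator" unfolding P_def by (rule PP.sets_PiM_generator)
    have "measure (distr P P T) B \<le> K * measure P B"
    proof (rule ext_le[OF fmD finP])
      show "algebra (space P) PP.generator" unfolding P_def by (rule PP.algebra_generator)
      show "sets (distr P P T) = sigma_sets (space P) PP.generator" using sP by simp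
      show "sets P = sigma_sets (space P) PP.generator" by (rule sP)
      show "0 \<le> K" by (simp add: K_def)
      show "B \<in> sets (distr P P T)" using B by simp
      fix A assume A: "A \<in> PP.generator"
      have "A \<in> sets P" using A sP by auto
      then show "measure (distr P P T) A \<le> K * measure P A"
        using gen[OF A] Tm by (simp add: measure_distr)
    qed
    then show ?thesis using Tm B by (simp add: measure_distr)
  qed

  define A where "A = {\<eta> \<in> space P. observe N E C \<sigma> \<theta>0 \<eta> \<in> Obs}"
  define B where "B = {\<eta> \<in> space P. observe N E C \<sigma> \<theta>0' \<eta> \<in> Obs}"
  have pA: "obs_prob N E C \<sigma> c q \<theta>0 Obs = measure P A" by (simp add: obs_prob_def noise A_def)
  have pB: "obs_prob N E C \<sigma> c q \<theta>0' Obs = measure P B" by (simp add: obs_prob_def noise B_def)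
  have AB: "A = T -` B \<inter> space P" using key Tin by (auto simp: A_def B_def)
  have BA: "B = T' -` A \<inter> space P"
  proof -
    have "observe N E C \<sigma> \<theta>0 (T' \<eta>) = observe N E C \<sigma> \<theta>0' \<eta>" if "\<eta> \<in> space P" for \<eta>
      using key[OF Tin(2)[of \<eta>]] TT'[OF that] by simp
    then show ?thesis using Tin by (auto simp: A_def B_def)
  qed
  show ?thesis
  proof (cases "B \<in> sets P")
    case True
    then show ?thesis using ext[OF True] by (simp add: pA pB AB K_def \<sigma>m_def)
  next
    case False
    have "A \<notin> sets P"
    proof
      assume "A \<in> sets P"
      then have "T' -` A \<inter> space P \<in> sets P" by (rule measurable_sets[OF T'm])
      then show False using False BA by simp
    qed
    then have "measure P A = 0" by (rule measure_notin_sets)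
    then show ?thesis by (simp add: pA pB)
  qed
qed

end
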